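(* There exists a full amicable orthogonal design $AOD\big(48;\ 4,10,34;\ 4,44\big)$.
   Context: An orthogonal design $OD(m;c_1,\ldots,c_k)$ is an $m\times m$ matrix $X$ with entries from $\{0,\pm x_1,\ldots,\pm x_k\}$, where $x_1,\ldots,x_k$ are commuting indeterminates, such that $XX^{\rm T}=(\sum_j c_jx_j^2)I_m$. An amicable orthogonal design $AOD(m;c_1,\ldots,c_k;d_1,\ldots,d_\ell)$ is a pair $(X;Y)$ where $X$ is an $OD(m;c_1,\ldots,c_k)$ in indeterminates $x_1,\ldots,x_k$, $Y$ is an $OD(m;d_1,\ldots,d_\ell)$ in indeterminates $y_1,\ldots,y_\ell$ disjoint from the $x_i$, and $XY^{\rm T}=YX^{\rm T}$. It is full if neither $X$ nor $Y$ has a zero entry. *)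

theory Defs
  imports Main "HOL.Real"
begin

text \<open>A design matrix of order m is encoded as a function X :: nat => nat => int
  (only indices i, j < m matter). An entry 0 means the zero entry; an entry
  t > 0 means +x_t, and an entry -t means -x_t (variables are numbered 1..k).
  The identity in commuting indeterminates is expressed as an identity holding
  for all real values of the indeterminates (equivalent to a polynomial identity).\<close>

definition entry_val :: "(nat \<Rightarrow> real) \<Rightarrow> int \<Rightarrow> real" where
  "entry_val x e = (if e = 0 then 0 else of_int (sgn e) * x (nat \<bar>e\<bar>))"

definition is_OD :: "nat \<Rightarrow> nat list \<Rightarrow> (nat \<Rightarrow> nat \<Rightarrow> int) \<Rightarrow> bool" where
  "is_OD m c X \<longleftrightarrow>
     (\<forall>i<m. \<forall>j<m. \<bar>X i j\<bar> \<le> int (length c)) \<and>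
     (\<forall>x::nat \<Rightarrow> real. \<forall>i<m. \<forall>j<m.
        (\<Sum>l<m. entry_val x (X i l) * entry_val x (X j l)) =
        (if i = j then (\<Sum>t<length c. of_nat (c ! t) * (x (Suc t))\<^sup>2) else 0))"

definition is_AOD :: "nat \<Rightarrow> nat list \<Rightarrow> nat list \<Rightarrow>
    (nat \<Rightarrow> nat \<Rightarrow> int) \<Rightarrow> (nat \<Rightarrow> nat \<Rightarrow> int) \<Rightarrow> bool" where
  "is_AOD m c d X Y \<longleftrightarrow> is_OD m c X \<and> is_OD m d Y \<and>
     (\<forall>(x::nat \<Rightarrow> real) (y::nat \<Rightarrow> real). \<forall>i<m. \<forall>j<m.
        (\<Sum>l<m. entry_val x (X i l) * entry_val y (Y j l)) =
        (\<Sum>l<m. entry_val y (Y i l) * entry_val x (X j l)))"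

definition is_full :: "nat \<Rightarrow> (nat \<Rightarrow> nat \<Rightarrow> int) \<Rightarrow> (nat \<Rightarrow> nat \<Rightarrow> int) \<Rightarrow> bool" where
  "is_full m X Y \<longleftrightarrow> (\<forall>i<m. \<forall>j<m. X i j \<noteq> 0 \<and> Y i j \<noteq> 0)"

end

theory Submission imports Defs begin


definition kron :: "nat \<Rightarrow> nat \<Rightarrow> (nat \<Rightarrow> nat \<Rightarrow> nat \<Rightarrow> int) \<Rightarrow> (nat \<Rightarrow> nat \<Rightarrow> nat \<Rightarrow> int) \<Rightarrow> nat \<Rightarrow> nat \<Rightarrow> int" where
  "kron m k P M i j = (\<Sum>u<k. P u (i div m) (j div m) * M u (i mod m) (j mod m))"

definition ip :: "nat \<Rightarrow> (nat \<Rightarrow> nat \<Rightarrow> int) \<Rightarrow> (nat \<Rightarrow> nat \<Rightarrow> int) \<Rightarrow> nat \<Rightarrow> nat \<Rightarrow> int" where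
  "ip n A B I J = (\<Sum>L<n. A I L * B J L)"

definition bp :: "nat \<Rightarrow> (nat \<Rightarrow> real) \<Rightarrow> (nat \<Rightarrow> real) \<Rightarrow> (nat \<Rightarrow> nat \<Rightarrow> int) \<Rightarrow> (nat \<Rightarrow> nat \<Rightarrow> int) \<Rightarrow> nat \<Rightarrow> nat \<Rightarrow> real" where
  "bp m x y A B i j = (\<Sum>l<m. entry_val x (A i l) * entry_val y (B j l))"

lemma ev_zero[simp]: "entry_val x 0 = 0"
  by (simp add: entry_val_def)

lemma ev_neg: "entry_val x (- e) = - entry_val x e"
  by (simp add: entry_val_def)

lemma ev_sign: assumes "s \<in> {-1,0,1}" shows "entry_val x (s * e) = of_int s * entry_val x e"
  using assms by (auto simp: ev_neg)

lemma ev_kron: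
  fixes k :: nat and P e :: "nat \<Rightarrow> int"
  assumes "\<forall>u<k. P u \<in> {-1,0,1}" and "\<forall>u<k. \<forall>v<k. u \<noteq> v \<longrightarrow> P u * P v = 0"
  shows "entry_val x (\<Sum>u<k. P u * e u) = (\<Sum>u<k. of_int (P u) * entry_val x (e u))"
proof (cases "\<forall>u<k. P u = 0")
  case True
  then show ?thesis by simp
next
  case False
  then obtain u0 where u0: "u0 < k" "P u0 \<noteq> 0" by auto
  have z: "\<And>u. u < k \<Longrightarrow> u \<noteq> u0 \<Longrightarrow> P u = 0"
    using assms(2) u0 by (metis mult_eq_0_iff)
  have "(\<Sum>u<k. P u * e u) = (\<Sum>u\<in>{u0}. P u * e u)"
    by (rule sum.mono_neutral_right) (use u0 z in auto)
  moreover have "(\<Sum>u<k. of_int (P u) * entry_val x (e u)) = (\<Sum>u\<in>{u0}. of_int (P u) * entry_val x (e u))"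
    by (rule sum.mono_neutral_right) (use u0 z in auto)
  moreover have "P u0 \<in> {-1,0,1}" using assms(1) u0 by blast
  ultimately show ?thesis using ev_sign[of "P u0" x "e u0"] by simp
qed

lemma sum_split: "(\<Sum>l<n*m. f l) = (\<Sum>L<n. \<Sum>l<m. f (L*m + l))" for n m :: nat and f :: "nat \<Rightarrow> 'a::comm_monoid_add"
proof (induction n)
  case 0 then show ?case by simp
next
  case (Suc n)
  have "(\<Sum>l<Suc n * m. f l) = (\<Sum>l<n*m. f l) + (\<Sum>l\<in>{n*m..<n*m+m}. f l)"
    by (simp add: add.commute sum.atLeastLessThan_concat[symmetric] lessThan_atLeast0
        sum.atLeastLessThan_concat)
  also have "(\<Sum>l\<in>{n*m..<n*m+m}. f l) = (\<Sum>l<m. f (n*m + l))"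
    using sum.shift_bounds_nat_ivl[of f 0 "n*m" m] by (simp add: lessThan_atLeast0 add.commute)
  finally show ?case using Suc by simp
qed

lemma swap4: "(\<Sum>a\<in>A. \<Sum>b\<in>B. \<Sum>c\<in>C. \<Sum>d\<in>D. f a b c d) = (\<Sum>c\<in>C. \<Sum>d\<in>D. \<Sum>a\<in>A. \<Sum>b\<in>B. f a b c d)"
proof -
  have "(\<Sum>a\<in>A. \<Sum>b\<in>B. \<Sum>c\<in>C. \<Sum>d\<in>D. f a b c d) = (\<Sum>a\<in>A. \<Sum>c\<in>C. \<Sum>b\<in>B. \<Sum>d\<in>D. f a b c d)"
    by (rule sum.cong[OF refl], rule sum.swap)
  also have "\<dots> = (\<Sum>a\<in>A. \<Sum>c\<in>C. \<Sum>d\<in>D. \<Sum>b\<in>B. f a b c d)"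
    by (intro sum.cong refl, rule sum.swap)
  also have "\<dots> = (\<Sum>c\<in>C. \<Sum>a\<in>A. \<Sum>d\<in>D. \<Sum>b\<in>B. f a b c d)"
    by (rule sum.swap)
  also have "\<dots> = (\<Sum>c\<in>C. \<Sum>d\<in>D. \<Sum>a\<in>A. \<Sum>b\<in>B. f a b c d)"
    by (intro sum.cong refl, rule sum.swap)
  finally show ?thesis .
qed

lemma kron_inner:
  assumes vA: "\<forall>I<n. \<forall>J<n. (\<forall>u<kA. PA u I J \<in> {-1,0,1}) \<and> (\<forall>u<kA. \<forall>v<kA. u \<noteq> v \<longrightarrow> PA u I J * PA v I J = 0)"
    and vB: "\<forall>I<n. \<forall>J<n. (\<forall>u<kB. PB u I J \<in> {-1,0,1}) \<and> (\<forall>u<kB. \<forall>v<kB. u \<noteq> v \<longrightarrow> PB u I J * PB v I J = 0)"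
    and i: "i < n*m" and j: "j < n*m"
  shows "(\<Sum>l<n*m. entry_val x (kron m kA PA MA i l) * entry_val y (kron m kB PB MB j l)) =
     (\<Sum>u<kA. \<Sum>v<kB. of_int (ip n (PA u) (PB v) (i div m) (j div m)) * bp m x y (MA u) (MB v) (i mod m) (j mod m))"
proof -
  have m0: "m > 0" using i by (cases m) auto
  have I: "i div m < n" using i m0 by (simp add: less_mult_imp_div_less)
  have J: "j div m < n" using j m0 by (simp add: less_mult_imp_div_less)
  let ?a = "\<lambda>u L. of_int (PA u (i div m) L) :: real"
  let ?b = "\<lambda>u l. entry_val x (MA u (i mod m) l)"
  let ?c = "\<lambda>v L. of_int (PB v (j div m) L) :: real"
  let ?d = "\<lambda>v l. entry_val y (MB v (j mod m) l)"
  have "(\<Sum>l<n*m. entry_val x (kron m kA PA MA i l) * entry_val y (kron m kB PB MB j l)) =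
        (\<Sum>L<n. \<Sum>l<m. entry_val x (kron m kA PA MA i (L*m+l)) * entry_val y (kron m kB PB MB j (L*m+l)))"
    by (rule sum_split)
  also have "\<dots> = (\<Sum>L<n. \<Sum>l<m. (\<Sum>u<kA. ?a u L * ?b u l) * (\<Sum>v<kB. ?c v L * ?d v l))"
  proof (intro sum.cong refl)
    fix L l assume L: "L \<in> {..<n}" and l: "l \<in> {..<m}"
    have dm: "(L*m+l) div m = L" "(L*m+l) mod m = l" using l m0 by auto
    show "entry_val x (kron m kA PA MA i (L*m+l)) * entry_val y (kron m kB PB MB j (L*m+l)) =
          (\<Sum>u<kA. ?a u L * ?b u l) * (\<Sum>v<kB. ?c v L * ?d v l)"
      unfolding kron_def dm
      using ev_kron[of kA "\<lambda>u. PA u (i div m) L" x "\<lambda>u. MA u (i mod m) l"]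
            ev_kron[of kB "\<lambda>u. PB u (j div m) L" y "\<lambda>u. MB u (j mod m) l"]
            vA vB I J L by auto
  qed
  also have "\<dots> = (\<Sum>L<n. \<Sum>l<m. \<Sum>u<kA. \<Sum>v<kB. (?a u L * ?c v L) * (?b u l * ?d v l))"
    by (simp add: sum_product mult_ac)
  also have "\<dots> = (\<Sum>u<kA. \<Sum>v<kB. \<Sum>L<n. \<Sum>l<m. (?a u L * ?c v L) * (?b u l * ?d v l))"
    by (rule swap4)
  also have "\<dots> = (\<Sum>u<kA. \<Sum>v<kB. (\<Sum>L<n. ?a u L * ?c v L) * (\<Sum>l<m. ?b u l * ?d v l))"
    by (simp add: sum_product)
  also have "\<dots> = (\<Sum>u<kA. \<Sum>v<kB. of_int (ip n (PA u) (PB v) (i div m) (j div m)) * bp m x y (MA u) (MB v) (i mod m) (j mod m))"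
    by (simp add: ip_def bp_def)
  finally show ?thesis .
qed



definition PXl :: "int list list list" where
  "PXl = [[[1,0,0,0,0,0,0,0,0,0,0,0], [0,1,0,0,0,0,0,0,0,0,0,0], [0,0,1,0,0,0,0,0,0,0,0,0], [0,0,0,1,0,0,0,0,0,0,0,0], [0,0,0,0,1,0,0,0,0,0,0,0], [0,0,0,0,0,1,0,0,0,0,0,0], [0,0,0,0,0,0,1,0,0,0,0,0], [0,0,0,0,0,0,0,1,0,0,0,0], [0,0,0,0,0,0,0,0,1,0,0,0], [0,0,0,0,0,0,0,0,0,1,0,0], [0,0,0,0,0,0,0,0,0,0,1,0], [0,0,0,0,0,0,0,0,0,0,0,1]],
  [[0,1,-1,0,1,1,0,0,1,0,0,0], [-1,0,1,1,1,0,0,1,0,0,0,0], [1,-1,0,1,0,1,1,0,0,0,0,0], [0,-1,-1,0,1,-1,0,0,0,0,0,-1], [-1,-1,0,-1,0,1,0,0,0,0,-1,0], [-1,0,-1,1,-1,0,0,0,0,-1,0,0], [0,0,-1,0,0,0,0,1,-1,1,0,1], [0,-1,0,0,0,0,-1,0,1,0,1,1], [-1,0,0,0,0,0,1,-1,0,1,1,0], [0,0,0,0,0,1,-1,0,-1,0,1,-1], [0,0,0,0,1,0,0,-1,-1,-1,0,1], [0,0,0,1,0,0,-1,-1,0,1,-1,0]],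
  [[0,0,0,1,0,0,-1,-1,0,-1,1,1], [0,0,0,0,0,1,-1,0,-1,1,1,-1], [0,0,0,0,1,0,0,-1,-1,1,-1,1], [-1,0,0,0,0,0,1,-1,1,1,1,0], [0,0,-1,0,0,0,-1,1,1,1,0,1], [0,-1,0,0,0,0,1,1,-1,0,1,1], [1,1,0,-1,1,-1,0,0,0,0,1,0], [1,0,1,1,-1,-1,0,0,0,1,0,0], [0,1,1,-1,-1,1,0,0,0,0,0,1], [1,-1,-1,-1,-1,0,0,-1,0,0,0,0], [-1,-1,1,-1,0,-1,-1,0,0,0,0,0], [-1,1,-1,0,-1,-1,0,0,-1,0,0,0]]]"
definition PYl :: "int list list list" where
  "PYl = [[[-1,0,0,0,0,0,0,0,0,0,0,0], [0,-1,0,0,0,0,0,0,0,0,0,0], [0,0,-1,0,0,0,0,0,0,0,0,0], [0,0,0,-1,0,0,0,0,0,0,0,0], [0,0,0,0,-1,0,0,0,0,0,0,0], [0,0,0,0,0,-1,0,0,0,0,0,0], [0,0,0,0,0,0,-1,0,0,0,0,0], [0,0,0,0,0,0,0,-1,0,0,0,0], [0,0,0,0,0,0,0,0,-1,0,0,0], [0,0,0,0,0,0,0,0,0,-1,0,0], [0,0,0,0,0,0,0,0,0,0,-1,0], [0,0,0,0,0,0,0,0,0,0,0,-1]],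
  [[0,1,1,-1,1,-1,1,-1,1,-1,1,-1], [-1,0,1,1,1,-1,1,1,1,1,-1,1], [-1,-1,0,-1,-1,-1,-1,1,1,1,1,-1], [1,-1,1,0,1,1,-1,-1,1,1,1,1], [-1,-1,1,-1,0,1,1,-1,-1,1,-1,-1], [1,1,1,-1,-1,0,1,1,-1,1,1,1], [-1,-1,1,1,-1,-1,0,-1,-1,-1,1,1], [1,-1,-1,1,1,-1,1,0,-1,1,1,-1], [-1,-1,-1,-1,1,1,1,1,0,-1,1,1], [1,-1,-1,-1,-1,-1,1,-1,1,0,-1,1], [-1,1,-1,-1,1,-1,-1,-1,-1,1,0,1], [1,-1,1,-1,1,-1,-1,1,-1,-1,-1,0]]]"
definition MXl :: "int list list list" where
  "MXl = [[[1,-1,1,-1], [1,-1,-1,1], [1,1,1,1], [1,1,-1,-1]], [[2,-2,3,-3], [-3,3,2,-2], [-2,-2,-3,-3], [3,3,-2,-2]], [[3,-3,3,-3], [3,-3,-3,3], [-3,-3,-3,-3], [-3,-3,3,3]]]"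
definition MYl :: "int list list list" where
  "MYl = [[[1,1,1,1], [1,1,-1,-1], [1,-1,1,-1], [1,-1,-1,1]], [[2,2,2,2], [2,2,-2,-2], [-2,2,-2,2], [-2,2,2,-2]]]"

definition PX :: "nat \<Rightarrow> nat \<Rightarrow> nat \<Rightarrow> int" where "PX u I J = PXl ! u ! I ! J"
definition PY :: "nat \<Rightarrow> nat \<Rightarrow> nat \<Rightarrow> int" where "PY u I J = PYl ! u ! I ! J"
definition MX :: "nat \<Rightarrow> nat \<Rightarrow> nat \<Rightarrow> int" where "MX u I J = MXl ! u ! I ! J"
definition MY :: "nat \<Rightarrow> nat \<Rightarrow> nat \<Rightarrow> int" where "MY u I J = MYl ! u ! I ! J"


lemma sum_upt_list: "(\<Sum>L<n. f L) = sum_list (map f [0..<n])"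
  by (induct n) auto

lemma la2: "list_all (\<lambda>I. list_all (\<lambda>J. P I J) [0..<n]) [0..<n] \<Longrightarrow> \<forall>I<n. \<forall>J<n. P I J"
  by (simp add: list_all_iff)
lemma dX00: "\<forall>I<12. \<forall>J<12. ip 12 (PX 0) (PX 0) I J = (if I = J then 1 else 0)"
  by (rule la2) (unfold ip_def sum_upt_list PX_def PXl_def PY_def PYl_def, code_simp)
lemma dX11: "\<forall>I<12. \<forall>J<12. ip 12 (PX 1) (PX 1) I J = (if I = J then 5 else 0)"
  by (rule la2) (unfold ip_def sum_upt_list PX_def PXl_def PY_def PYl_def, code_simp)
lemma dX22: "\<forall>I<12. \<forall>J<12. ip 12 (PX 2) (PX 2) I J = (if I = J then 6 else 0)"
  by (rule la2) (unfold ip_def sum_upt_list PX_def PXl_def PY_def PYl_def, code_simp)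
lemma aX01: "\<forall>I<12. \<forall>J<12. ip 12 (PX 0) (PX 1) I J = - ip 12 (PX 1) (PX 0) I J"
  by (rule la2) (unfold ip_def sum_upt_list PX_def PXl_def PY_def PYl_def, code_simp)
lemma aX02: "\<forall>I<12. \<forall>J<12. ip 12 (PX 0) (PX 2) I J = - ip 12 (PX 2) (PX 0) I J"
  by (rule la2) (unfold ip_def sum_upt_list PX_def PXl_def PY_def PYl_def, code_simp)
lemma aX12: "\<forall>I<12. \<forall>J<12. ip 12 (PX 1) (PX 2) I J = - ip 12 (PX 2) (PX 1) I J"
  by (rule la2) (unfold ip_def sum_upt_list PX_def PXl_def PY_def PYl_def, code_simp)
lemma dY00: "\<forall>I<12. \<forall>J<12. ip 12 (PY 0) (PY 0) I J = (if I = J then 1 else 0)"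
  by (rule la2) (unfold ip_def sum_upt_list PX_def PXl_def PY_def PYl_def, code_simp)
lemma dY11: "\<forall>I<12. \<forall>J<12. ip 12 (PY 1) (PY 1) I J = (if I = J then 11 else 0)"
  by (rule la2) (unfold ip_def sum_upt_list PX_def PXl_def PY_def PYl_def, code_simp)
lemma aY01: "\<forall>I<12. \<forall>J<12. ip 12 (PY 0) (PY 1) I J = - ip 12 (PY 1) (PY 0) I J"
  by (rule la2) (unfold ip_def sum_upt_list PX_def PXl_def PY_def PYl_def, code_simp)
lemma xy00: "\<forall>I<12. \<forall>J<12. ip 12 (PX 0) (PY 0) I J = ip 12 (PY 0) (PX 0) I J"
  by (rule la2) (unfold ip_def sum_upt_list PX_def PXl_def PY_def PYl_def, code_simp)
lemma xy01: "\<forall>I<12. \<forall>J<12. ip 12 (PX 0) (PY 1) I J = - ip 12 (PY 1) (PX 0) I J"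
  by (rule la2) (unfold ip_def sum_upt_list PX_def PXl_def PY_def PYl_def, code_simp)
lemma xy10: "\<forall>I<12. \<forall>J<12. ip 12 (PX 1) (PY 0) I J = - ip 12 (PY 0) (PX 1) I J"
  by (rule la2) (unfold ip_def sum_upt_list PX_def PXl_def PY_def PYl_def, code_simp)
lemma xy11: "\<forall>I<12. \<forall>J<12. ip 12 (PX 1) (PY 1) I J = ip 12 (PY 1) (PX 1) I J"
  by (rule la2) (unfold ip_def sum_upt_list PX_def PXl_def PY_def PYl_def, code_simp)
lemma xy20: "\<forall>I<12. \<forall>J<12. ip 12 (PX 2) (PY 0) I J = - ip 12 (PY 0) (PX 2) I J"
  by (rule la2) (unfold ip_def sum_upt_list PX_def PXl_def PY_def PYl_def, code_simp)
lemma xy21: "\<forall>I<12. \<forall>J<12. ip 12 (PX 2) (PY 1) I J = ip 12 (PY 1) (PX 2) I J"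
  by (rule la2) (unfold ip_def sum_upt_list PX_def PXl_def PY_def PYl_def, code_simp)
lemma validX: "\<forall>I<12. \<forall>J<12. (\<forall>u<3. PX u I J \<in> {-1,0,1}) \<and> (\<forall>u<3. \<forall>v<3. u \<noteq> v \<longrightarrow> PX u I J * PX v I J = 0)"
proof (rule la2)
  have e: "(\<forall>u<3. P u) \<longleftrightarrow> list_all P [0..<3]" for P by (auto simp: list_all_iff)
  show "list_all (\<lambda>I. list_all (\<lambda>J. (\<forall>u<3. PX u I J \<in> {-1,0,1}) \<and> (\<forall>u<3. \<forall>v<3. u \<noteq> v \<longrightarrow> PX u I J * PX v I J = 0)) [0..<12]) [0..<12]"
    unfolding e PX_def PXl_def by code_simp
qed

lemma validY: "\<forall>I<12. \<forall>J<12. (\<forall>u<2. PY u I J \<in> {-1,0,1}) \<and> (\<forall>u<2. \<forall>v<2. u \<noteq> v \<longrightarrow> PY u I J * PY v I J = 0)"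
proof (rule la2)
  have e: "(\<forall>u<2. P u) \<longleftrightarrow> list_all P [0..<2]" for P by (auto simp: list_all_iff)
  show "list_all (\<lambda>I. list_all (\<lambda>J. (\<forall>u<2. PY u I J \<in> {-1,0,1}) \<and> (\<forall>u<2. \<forall>v<2. u \<noteq> v \<longrightarrow> PY u I J * PY v I J = 0)) [0..<12]) [0..<12]"
    unfolding e PY_def PYl_def by code_simp
qed

lemma la4: "list_all (\<lambda>I. list_all (\<lambda>J. list_all (\<lambda>a. list_all (\<lambda>b. P I J a b) [0..<4]) [0..<4]) [0..<12]) [0..<12] \<Longrightarrow> \<forall>I<12. \<forall>J<12. \<forall>a<4. \<forall>b<4. P I J a b"
  by (simp add: list_all_iff)

lemma entX: "\<forall>I<12. \<forall>J<12. \<forall>a<4. \<forall>b<4. (\<Sum>u<3. PX u I J * MX u a b) \<noteq> 0 \<and> \<bar>\<Sum>u<3. PX u I J * MX u a b\<bar> \<le> 3"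
  by (rule la4) (unfold sum_upt_list PX_def PXl_def MX_def MXl_def, code_simp)

lemma entY: "\<forall>I<12. \<forall>J<12. \<forall>a<4. \<forall>b<4. (\<Sum>u<2. PY u I J * MY u a b) \<noteq> 0 \<and> \<bar>\<Sum>u<2. PY u I J * MY u a b\<bar> \<le> 2"
  by (rule la4) (unfold sum_upt_list PY_def PYl_def MY_def MYl_def, code_simp)

lemma all4: "(\<forall>i<(4::nat). P i) \<longleftrightarrow> P 0 \<and> P 1 \<and> P 2 \<and> P 3"
  by (auto simp: less_Suc_eq eval_nat_numeral)

lemma sum4: "(\<Sum>l<(4::nat). f l) = f 0 + f 1 + f 2 + f 3"
  by (simp add: eval_nat_numeral)

lemma ev1: "entry_val x 1 = x 1" by (simp add: entry_val_def)
lemma evm1: "entry_val x (-1) = - x 1" by (simp add: entry_val_def)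
lemma evn: "entry_val x (numeral n) = x (numeral n)" by (simp add: entry_val_def)
lemma evmn: "entry_val x (- numeral n) = - x (numeral n)" by (simp add: entry_val_def)

lemmas bsimps = bp_def sum4 MX_def MXl_def MY_def MYl_def
lemma bX00: "\<forall>i<4. \<forall>j<4. bp 4 x x (MX 0) (MX 0) i j = (if i = j then 4 * (x 1)^2 else 0)"
  unfolding all4 bsimps by (simp add: ev1 evm1 evn evmn power2_eq_square algebra_simps)
lemma bX11: "\<forall>i<4. \<forall>j<4. bp 4 x x (MX 1) (MX 1) i j = (if i = j then 2 * (x 2)^2 + 2 * (x 3)^2 else 0)"
  unfolding all4 bsimps by (simp add: ev1 evm1 evn evmn power2_eq_square algebra_simps)
lemma bX22: "\<forall>i<4. \<forall>j<4. bp 4 x x (MX 2) (MX 2) i j = (if i = j then 4 * (x 3)^2 else 0)"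
  unfolding all4 bsimps by (simp add: ev1 evm1 evn evmn power2_eq_square algebra_simps)
lemma bX01: "\<forall>i<4. \<forall>j<4. bp 4 x x (MX 0) (MX 1) i j = bp 4 x x (MX 1) (MX 0) i j"
  unfolding all4 bsimps by (simp add: ev1 evm1 evn evmn power2_eq_square algebra_simps)
lemma bX02: "\<forall>i<4. \<forall>j<4. bp 4 x x (MX 0) (MX 2) i j = bp 4 x x (MX 2) (MX 0) i j"
  unfolding all4 bsimps by (simp add: ev1 evm1 evn evmn power2_eq_square algebra_simps)
lemma bX12: "\<forall>i<4. \<forall>j<4. bp 4 x x (MX 1) (MX 2) i j = bp 4 x x (MX 2) (MX 1) i j"
  unfolding all4 bsimps by (simp add: ev1 evm1 evn evmn power2_eq_square algebra_simps)
lemma bY00: "\<forall>i<4. \<forall>j<4. bp 4 y y (MY 0) (MY 0) i j = (if i = j then 4 * (y 1)^2 else 0)"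
  unfolding all4 bsimps by (simp add: ev1 evm1 evn evmn power2_eq_square algebra_simps)
lemma bY11: "\<forall>i<4. \<forall>j<4. bp 4 y y (MY 1) (MY 1) i j = (if i = j then 4 * (y 2)^2 else 0)"
  unfolding all4 bsimps by (simp add: ev1 evm1 evn evmn power2_eq_square algebra_simps)
lemma bY01: "\<forall>i<4. \<forall>j<4. bp 4 y y (MY 0) (MY 1) i j = bp 4 y y (MY 1) (MY 0) i j"
  unfolding all4 bsimps by (simp add: ev1 evm1 evn evmn power2_eq_square algebra_simps)
lemma bxy00: "\<forall>i<4. \<forall>j<4. bp 4 x y (MX 0) (MY 0) i j = bp 4 y x (MY 0) (MX 0) i j"
  unfolding all4 bsimps by (simp add: ev1 evm1 evn evmn power2_eq_square algebra_simps)
lemma bxy01: "\<forall>i<4. \<forall>j<4. bp 4 x y (MX 0) (MY 1) i j = - bp 4 y x (MY 1) (MX 0) i j"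
  unfolding all4 bsimps by (simp add: ev1 evm1 evn evmn power2_eq_square algebra_simps)
lemma bxy10: "\<forall>i<4. \<forall>j<4. bp 4 x y (MX 1) (MY 0) i j = - bp 4 y x (MY 0) (MX 1) i j"
  unfolding all4 bsimps by (simp add: ev1 evm1 evn evmn power2_eq_square algebra_simps)
lemma bxy11: "\<forall>i<4. \<forall>j<4. bp 4 x y (MX 1) (MY 1) i j = bp 4 y x (MY 1) (MX 1) i j"
  unfolding all4 bsimps by (simp add: ev1 evm1 evn evmn power2_eq_square algebra_simps)
lemma bxy20: "\<forall>i<4. \<forall>j<4. bp 4 x y (MX 2) (MY 0) i j = - bp 4 y x (MY 0) (MX 2) i j"
  unfolding all4 bsimps by (simp add: ev1 evm1 evn evmn power2_eq_square algebra_simps)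
lemma bxy21: "\<forall>i<4. \<forall>j<4. bp 4 x y (MX 2) (MY 1) i j = bp 4 y x (MY 1) (MX 2) i j"
  unfolding all4 bsimps by (simp add: ev1 evm1 evn evmn power2_eq_square algebra_simps)

lemma sum3: "(\<Sum>u<(3::nat). f u) = f 0 + f 1 + f 2"
  by (simp add: eval_nat_numeral)
lemma sum2: "(\<Sum>u<(2::nat). f u) = f 0 + f 1"
  by (simp add: eval_nat_numeral)

definition Xm :: "nat \<Rightarrow> nat \<Rightarrow> int" where "Xm = kron 4 3 PX MX"
definition Ym :: "nat \<Rightarrow> nat \<Rightarrow> int" where "Ym = kron 4 2 PY MY"

lemma dm4: "i < 48 \<Longrightarrow> i div 4 < 12 \<and> i mod (4::nat) < 4"
  by auto

lemma eq_dm: "(i div 4 = j div 4 \<and> i mod 4 = j mod (4::nat)) = (i = j)"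
  by (metis div_mult_mod_eq)

lemma XX:
  assumes i: "i < 48" and j: "j < 48"
  shows "(\<Sum>l<48. entry_val x (Xm i l) * entry_val x (Xm j l)) =
         (if i = j then 4 * (x 1)^2 + 10 * (x 2)^2 + 34 * (x 3)^2 else 0)"
proof -
  define I J a b where "I = i div 4" and "J = j div 4" and "a = i mod 4" and "b = j mod 4"
  have IJ: "I < 12" "J < 12" "a < 4" "b < 4" using dm4[OF i] dm4[OF j] I_def J_def a_def b_def by auto
  have K: "(\<Sum>l<48. entry_val x (Xm i l) * entry_val x (Xm j l)) =
     (\<Sum>u<3. \<Sum>v<3. of_int (ip 12 (PX u) (PX v) I J) * bp 4 x x (MX u) (MX v) a b)"
    using kron_inner[where n=12 and m=4 and kA=3 and kB=3 and PA=PX and PB=PX and MA=MX and MB=MX and x=x and y=x, OF validX validX, of i j] i j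
    unfolding Xm_def I_def J_def a_def b_def by simp
  have e: "(I = J \<and> a = b) = (i = j)" using eq_dm I_def J_def a_def b_def by simp
  show ?thesis
    unfolding K sum3
    using dX00[rule_format, OF IJ(1,2)] dX11[rule_format, OF IJ(1,2)] dX22[rule_format, OF IJ(1,2)]
      aX01[rule_format, OF IJ(1,2)] aX02[rule_format, OF IJ(1,2)] aX12[rule_format, OF IJ(1,2)]
      bX00[rule_format, OF IJ(3,4)] bX11[rule_format, OF IJ(3,4)] bX22[rule_format, OF IJ(3,4)]
      bX01[rule_format, OF IJ(3,4)] bX02[rule_format, OF IJ(3,4)] bX12[rule_format, OF IJ(3,4)] e
    by (auto simp: algebra_simps)
qed

lemma YY:
  assumes i: "i < 48" and j: "j < 48"
  shows "(\<Sum>l<48. entry_val y (Ym i l) * entry_val y (Ym j l)) =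
         (if i = j then 4 * (y 1)^2 + 44 * (y 2)^2 else 0)"
proof -
  define I J a b where "I = i div 4" and "J = j div 4" and "a = i mod 4" and "b = j mod 4"
  have IJ: "I < 12" "J < 12" "a < 4" "b < 4" using dm4[OF i] dm4[OF j] I_def J_def a_def b_def by auto
  have K: "(\<Sum>l<48. entry_val y (Ym i l) * entry_val y (Ym j l)) =
     (\<Sum>u<2. \<Sum>v<2. of_int (ip 12 (PY u) (PY v) I J) * bp 4 y y (MY u) (MY v) a b)"
    using kron_inner[where n=12 and m=4 and kA=2 and kB=2 and PA=PY and PB=PY and MA=MY and MB=MY and x=y and y=y, OF validY validY, of i j] i j
    unfolding Ym_def I_def J_def a_def b_def by simp
  have e: "(I = J \<and> a = b) = (i = j)" using eq_dm I_def J_def a_def b_def by simp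
  show ?thesis
    unfolding K sum2
    using dY00[rule_format, OF IJ(1,2)] dY11[rule_format, OF IJ(1,2)] aY01[rule_format, OF IJ(1,2)]
      bY00[rule_format, OF IJ(3,4)] bY11[rule_format, OF IJ(3,4)] bY01[rule_format, OF IJ(3,4)] e
    by (auto simp: algebra_simps)
qed

lemma XY:
  assumes i: "i < 48" and j: "j < 48"
  shows "(\<Sum>l<48. entry_val x (Xm i l) * entry_val y (Ym j l)) =
         (\<Sum>l<48. entry_val y (Ym i l) * entry_val x (Xm j l))"
proof -
  define I J a b where "I = i div 4" and "J = j div 4" and "a = i mod 4" and "b = j mod 4"
  have IJ: "I < 12" "J < 12" "a < 4" "b < 4" using dm4[OF i] dm4[OF j] I_def J_def a_def b_def by auto
  have K1: "(\<Sum>l<48. entry_val x (Xm i l) * entry_val y (Ym j l)) =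
     (\<Sum>u<3. \<Sum>v<2. of_int (ip 12 (PX u) (PY v) I J) * bp 4 x y (MX u) (MY v) a b)"
    using kron_inner[where n=12 and m=4 and kA=3 and kB=2 and PA=PX and PB=PY and MA=MX and MB=MY and x=x and y=y, OF validX validY, of i j] i j
    unfolding Xm_def Ym_def I_def J_def a_def b_def by simp
  have K2: "(\<Sum>l<48. entry_val y (Ym i l) * entry_val x (Xm j l)) =
     (\<Sum>u<2. \<Sum>v<3. of_int (ip 12 (PY u) (PX v) I J) * bp 4 y x (MY u) (MX v) a b)"
    using kron_inner[where n=12 and m=4 and kA=2 and kB=3 and PA=PY and PB=PX and MA=MY and MB=MX and x=y and y=x, OF validY validX, of i j] i j
    unfolding Xm_def Ym_def I_def J_def a_def b_def by simp
  show ?thesis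
    unfolding K1 K2 sum2 sum3
    using xy00[rule_format, OF IJ(1,2)] xy01[rule_format, OF IJ(1,2)] xy10[rule_format, OF IJ(1,2)]
      xy11[rule_format, OF IJ(1,2)] xy20[rule_format, OF IJ(1,2)] xy21[rule_format, OF IJ(1,2)]
      bxy00[rule_format, OF IJ(3,4)] bxy01[rule_format, OF IJ(3,4)] bxy10[rule_format, OF IJ(3,4)]
      bxy11[rule_format, OF IJ(3,4)] bxy20[rule_format, OF IJ(3,4)] bxy21[rule_format, OF IJ(3,4)]
    by (simp add: algebra_simps)
qed

lemma entXm: "i < 48 \<Longrightarrow> j < 48 \<Longrightarrow> Xm i j \<noteq> 0 \<and> \<bar>Xm i j\<bar> \<le> 3"
  unfolding Xm_def kron_def using entX dm4 by blast
lemma entYm: "i < 48 \<Longrightarrow> j < 48 \<Longrightarrow> Ym i j \<noteq> 0 \<and> \<bar>Ym i j\<bar> \<le> 2"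
  unfolding Ym_def kron_def using entY dm4 by blast

theorem mainTheorem3:
  shows "\<exists>X Y. is_AOD 48 [4, 10, 34] [4, 44] X Y \<and> is_full 48 X Y"
proof (intro exI conjI)
  show "is_AOD 48 [4, 10, 34] [4, 44] Xm Ym"
    unfolding is_AOD_def is_OD_def
  proof (intro conjI allI impI)
    fix i j assume "i < (48::nat)" "j < (48::nat)"
    then show "\<bar>Xm i j\<bar> \<le> int (length [4, 10, 34::nat])" using entXm by force
  next
    fix x :: "nat \<Rightarrow> real" and i j assume "i < (48::nat)" "j < (48::nat)"
    then show "(\<Sum>l<48. entry_val x (Xm i l) * entry_val x (Xm j l)) =
       (if i = j then \<Sum>t<length [4, 10, 34::nat]. real ([4, 10, 34] ! t) * (x (Suc t))\<^sup>2 else 0)"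
      using XX by (simp add: sum3 numeral_eq_Suc)
  next
    fix i j assume "i < (48::nat)" "j < (48::nat)"
    then show "\<bar>Ym i j\<bar> \<le> int (length [4, 44::nat])" using entYm by force
  next
    fix x :: "nat \<Rightarrow> real" and i j assume "i < (48::nat)" "j < (48::nat)"
    then show "(\<Sum>l<48. entry_val x (Ym i l) * entry_val x (Ym j l)) =
       (if i = j then \<Sum>t<length [4, 44::nat]. real ([4, 44] ! t) * (x (Suc t))\<^sup>2 else 0)"
      using YY by (simp add: sum2 numeral_eq_Suc)
  next
    fix x y :: "nat \<Rightarrow> real" and i j assume "i < (48::nat)" "j < (48::nat)"
    then show "(\<Sum>l<48. entry_val x (Xm i l) * entry_val y (Ym j l)) =
       (\<Sum>l<48. entry_val y (Ym i l) * entry_val x (Xm j l))" by (rule XY)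
  qed
  show "is_full 48 Xm Ym"
    unfolding is_full_def using entXm entYm by blast
qed

end
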